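(* If $p_{i,n}\ge0$ for all $n\in\mathbb N$ and $i\in\{0,\dots,m_n\}$, then the unique bounded solution $F$ on $[0,1]$ of the system $$f\big(\hat\varphi^k(x)\big)=\tilde\beta_{i_{k+1}(x),k+1}+\tilde p_{i_{k+1}(x),k+1}\,f\big(\hat\varphi^{k+1}(x)\big),\quad x=\Delta^{-\tilde Q}_{i_1(x)i_2(x)\dots}\in[0,1],\ k=0,1,2,\dots,$$ namely $F(x)=\beta_{i_1(x),1}+\sum_{k\ge2}\tilde\beta_{i_k(x),k}\prod_{j=1}^{k-1}\tilde p_{i_j(x),j}$, is a continuous probability distribution function on $[0,1]$: $F(0)=0$, $F(1)=1$, $F$ is non-decreasing and continuous on $[0,1]$.
   Context: Let $(m_n)_{n\ge1}$ be finite nonnegative integers and $\tilde Q=\|q_{i,n}\|$ ($i\in\{0,\dots,m_n\}$) with $q_{i,n}>0$, $\sum_{i}q_{i,n}=1$ for all $n$, and $\prod_n q_{i_n,n}=0$ for every digit sequence $(i_n)$. Put $a_{0,n}=0$, $a_{i,n}=\sum_{l<i}q_{l,n}$; $\Delta^{\tilde Q}_{j_1j_2\dots}=a_{j_1,1}+\sum_{n\ge2}a_{j_n,n}\prod_{l<n}q_{j_l,l}$. The nega-$\tilde Q$-representation $x=\Delta^{-\tilde Q}_{i_1i_2\dots}$ means $x=\Delta^{\tilde Q}_{i_1[m_2-i_2]i_3[m_4-i_4]\dots}$; every $x\in[0,1]$ has one. Shift operator: if $y=\Delta^{\tilde Q}_{j_1j_2\dots}$ then $\hat\varphi^k(y)=a_{j_{k+1},k+1}+\sum_{n\ge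 k+2}a_{j_n,n}\prod_{l=k+1}^{n-1}q_{j_l,l}$ ($\hat\varphi^0=\mathrm{id}$). Let $P=\|p_{i,n}\|$ have the same shape with $p_{i,n}\in(-1,1)$, $\sum_ip_{i,n}=1$, $\prod_n|p_{i_n,n}|=0$ for every digit sequence, $0<\sum_{i<c}p_{i,n}<1$ for $c\in\{1,\dots,m_n\}$. Put $\beta_{0,n}=0$, $\beta_{c,n}=\sum_{i<c}p_{i,n}$; for odd $n$: $\tilde p_{i,n}=p_{i,n}$, $\tilde\beta_{i,n}=\beta_{i,n}$; for even $n$: $\tilde p_{i,n}=p_{m_n-i,n}$, $\tilde\beta_{i,n}=\beta_{m_n-i,n}$. *)

theory Defs
  imports "HOL-Analysis.Analysis"
begin

text \<open>Conventions: columns are indexed by n \<ge> 1; an entry of a matrix is written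
  q i n (digit i, column n); m n is the largest digit in column n.\<close>

definition admissible :: "(nat \<Rightarrow> nat) \<Rightarrow> (nat \<Rightarrow> nat) \<Rightarrow> bool" where
  "admissible m d \<longleftrightarrow> (\<forall>n\<ge>1. d n \<le> m n)"

definition Qmatrix :: "(nat \<Rightarrow> nat) \<Rightarrow> (nat \<Rightarrow> nat \<Rightarrow> real) \<Rightarrow> bool" where
  "Qmatrix m q \<longleftrightarrow>
     (\<forall>n\<ge>1. \<forall>i\<le>m n. q i n > 0) \<and>
     (\<forall>n\<ge>1. (\<Sum>i\<le>m n. q i n) = 1) \<and>
     (\<forall>d. admissible m d \<longrightarrow> (\<lambda>N. \<Prod>n\<in>{1..N}. q (d n) n) \<longlonglongrightarrow> 0)"

definition Pmatrix :: "(nat \<Rightarrow> nat) \<Rightarrow> (nat \<Rightarrow> nat \<Rightarrow> real) \<Rightarrow> bool" where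
  "Pmatrix m p \<longleftrightarrow>
     (\<forall>n\<ge>1. \<forall>i\<le>m n. -1 < p i n \<and> p i n < 1) \<and>
     (\<forall>n\<ge>1. (\<Sum>i\<le>m n. p i n) = 1) \<and>
     (\<forall>d. admissible m d \<longrightarrow> (\<lambda>N. \<Prod>n\<in>{1..N}. \<bar>p (d n) n\<bar>) \<longlonglongrightarrow> 0) \<and>
     (\<forall>n\<ge>1. \<forall>c\<in>{1..m n}. 0 < (\<Sum>i<c. p i n) \<and> (\<Sum>i<c. p i n) < 1)"

definition acoef :: "(nat \<Rightarrow> nat \<Rightarrow> real) \<Rightarrow> nat \<Rightarrow> nat \<Rightarrow> real" where
  "acoef q i n = (\<Sum>l<i. q l n)"

definition DeltaQ :: "(nat \<Rightarrow> nat \<Rightarrow> real) \<Rightarrow> (nat \<Rightarrow> nat) \<Rightarrow> real" where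
  "DeltaQ q j = (\<Sum>k. acoef q (j (k+1)) (k+1) * (\<Prod>l\<in>{1..k}. q (j l) l))"

text \<open>x = Delta^{-Q}_{i_1 i_2 ...}: digits in even positions are reflected.\<close>
definition nega_rep :: "(nat \<Rightarrow> nat) \<Rightarrow> (nat \<Rightarrow> nat \<Rightarrow> real) \<Rightarrow> real \<Rightarrow> (nat \<Rightarrow> nat) \<Rightarrow> bool" where
  "nega_rep m q x i \<longleftrightarrow> admissible m i \<and>
     x = DeltaQ q (\<lambda>n. if even n then m n - i n else i n)"

definition beta :: "(nat \<Rightarrow> nat \<Rightarrow> real) \<Rightarrow> nat \<Rightarrow> nat \<Rightarrow> real" where
  "beta p c n = (\<Sum>i<c. p i n)"

definition ptilde :: "(nat \<Rightarrow> nat) \<Rightarrow> (nat \<Rightarrow> nat \<Rightarrow> real) \<Rightarrow> nat \<Rightarrow> nat \<Rightarrow> real" where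
  "ptilde m p i n = (if odd n then p i n else p (m n - i) n)"

definition betatilde :: "(nat \<Rightarrow> nat) \<Rightarrow> (nat \<Rightarrow> nat \<Rightarrow> real) \<Rightarrow> nat \<Rightarrow> nat \<Rightarrow> real" where
  "betatilde m p i n = (if odd n then beta p i n else beta p (m n - i) n)"

text \<open>The k-th term of the series
  F(x) = beta_{i_1,1} + sum_{k\<ge>2} betatilde_{i_k,k} prod_{j<k} ptilde_{i_j,j}
  (term number 0 is beta_{i_1,1} = betatilde_{i_1,1}, as 1 is odd).\<close>
definition Fterm :: "(nat \<Rightarrow> nat) \<Rightarrow> (nat \<Rightarrow> nat \<Rightarrow> real) \<Rightarrow> (nat \<Rightarrow> nat) \<Rightarrow> nat \<Rightarrow> real" where
  "Fterm m p i k = betatilde m p (i (k+1)) (k+1) * (\<Prod>j\<in>{1..k}. ptilde m p (i j) j)"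

end

theory Submission
  imports Defs
begin

definition Wmat :: "(nat \<Rightarrow> nat) \<Rightarrow> (nat \<Rightarrow> nat \<Rightarrow> real) \<Rightarrow> bool" where
  "Wmat m w \<longleftrightarrow>
     (\<forall>n\<ge>1. \<forall>i\<le>m n. w i n \<ge> 0) \<and>
     (\<forall>n\<ge>1. (\<Sum>i\<le>m n. w i n) = 1) \<and>
     (\<forall>n\<ge>1. w (m n) n > 0) \<and>
     (\<forall>d. admissible m d \<longrightarrow> (\<lambda>N. \<Prod>n\<in>{1..N}. w (d n) n) \<longlonglongrightarrow> 0)"

definition dterm :: "(nat \<Rightarrow> nat \<Rightarrow> real) \<Rightarrow> (nat \<Rightarrow> nat) \<Rightarrow> nat \<Rightarrow> real" where
  "dterm w j k = acoef w (j (k+1)) (k+1) * (\<Prod>l\<in>{1..k}. w (j l) l)"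

lemma DeltaQ_dterm: "DeltaQ w j = suminf (dterm w j)"
  unfolding DeltaQ_def dterm_def by simp

definition shm :: "(nat \<Rightarrow> nat) \<Rightarrow> nat \<Rightarrow> nat" where "shm m n = m (Suc n)"
definition shw :: "(nat \<Rightarrow> nat \<Rightarrow> real) \<Rightarrow> nat \<Rightarrow> nat \<Rightarrow> real" where "shw w i n = w i (Suc n)"

lemma Wmat_nonneg: "Wmat m w \<Longrightarrow> n \<ge> 1 \<Longrightarrow> i \<le> m n \<Longrightarrow> w i n \<ge> 0"
  unfolding Wmat_def by blast
lemma Wmat_sum: "Wmat m w \<Longrightarrow> n \<ge> 1 \<Longrightarrow> (\<Sum>i\<le>m n. w i n) = 1"
  unfolding Wmat_def by blast
lemma Wmat_top: "Wmat m w \<Longrightarrow> n \<ge> 1 \<Longrightarrow> w (m n) n > 0"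
  unfolding Wmat_def by blast
lemma Wmat_prod: "Wmat m w \<Longrightarrow> admissible m d \<Longrightarrow> (\<lambda>N. \<Prod>n\<in>{1..N}. w (d n) n) \<longlonglongrightarrow> 0"
  unfolding Wmat_def by blast

lemma adm: "admissible m j \<Longrightarrow> n \<ge> 1 \<Longrightarrow> j n \<le> m n"
  unfolding admissible_def by blast

lemma acoef_nonneg: "Wmat m w \<Longrightarrow> n \<ge> 1 \<Longrightarrow> i \<le> Suc (m n) \<Longrightarrow> acoef w i n \<ge> 0"
  unfolding acoef_def by (intro sum_nonneg) (auto intro: Wmat_nonneg)

lemma acoef_mono: assumes "Wmat m w" "n \<ge> 1" "i \<le> i'" "i' \<le> Suc (m n)"
  shows "acoef w i n \<le> acoef w i' n"
  unfolding acoef_def using assms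
  by (intro sum_mono2) (auto intro: Wmat_nonneg)

lemma acoef_Suc: "acoef w (Suc i) n = acoef w i n + w i n"
  unfolding acoef_def by simp

lemma acoef_top: assumes "Wmat m w" "n \<ge> 1" shows "acoef w (Suc (m n)) n = 1"
  using Wmat_sum[OF assms] unfolding acoef_def by (simp add: lessThan_Suc_atMost)

lemma acoef_le1: assumes "Wmat m w" "n \<ge> 1" "i \<le> m n"
  shows "acoef w i n + w i n \<le> 1"
  using acoef_mono[OF assms(1,2), of "Suc i" "Suc (m n)"] assms acoef_top[OF assms(1,2)]
  by (simp add: acoef_Suc)

lemma prod_nonneg_adm: assumes "Wmat m w" "admissible m j"
  shows "(\<Prod>l\<in>{1..N}. w (j l) l) \<ge> 0"
  using assms by (intro prod_nonneg) (simp add: Wmat_nonneg adm)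

lemma dterm_nonneg: assumes "Wmat m w" "admissible m j" shows "dterm w j k \<ge> 0"
  unfolding dterm_def using assms
  by (intro mult_nonneg_nonneg prod_nonneg_adm acoef_nonneg) (auto dest: adm[of m j "Suc k"])

lemma partial_bound: assumes "Wmat m w" "admissible m j"
  shows "sum (dterm w j) {..<N} + (\<Prod>l\<in>{1..N}. w (j l) l) \<le> 1"
proof (induction N)
  case 0 then show ?case by simp
next
  case (Suc N)
  let ?P = "\<Prod>l\<in>{1..N}. w (j l) l"
  have j: "j (Suc N) \<le> m (Suc N)" using adm[OF assms(2)] by simp
  have "(\<Prod>l\<in>{1..Suc N}. w (j l) l) = ?P * w (j (Suc N)) (Suc N)"
    by (simp add: prod.nat_ivl_Suc')
  then have "sum (dterm w j) {..<Suc N} + (\<Prod>l\<in>{1..Suc N}. w (j l) l)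
     = sum (dterm w j) {..<N} + ?P * (acoef w (j (Suc N)) (Suc N) + w (j (Suc N)) (Suc N))"
    by (simp add: dterm_def algebra_simps)
  also have "\<dots> \<le> sum (dterm w j) {..<N} + ?P * 1"
    using acoef_le1[OF assms(1) _ j] prod_nonneg_adm[OF assms] by (intro add_left_mono mult_left_mono) auto
  finally show ?case using Suc by simp
qed

lemma partial_le1: assumes "Wmat m w" "admissible m j" shows "sum (dterm w j) {..<N} \<le> 1"
  using partial_bound[OF assms, of N] prod_nonneg_adm[OF assms, of N] by linarith

lemma dsummable: assumes "Wmat m w" "admissible m j" shows "summable (dterm w j)"
  using partial_le1[OF assms] dterm_nonneg[OF assms]
  by (intro summableI_nonneg_bounded[where x=1]) auto

lemma Delta_bounds: assumes "Wmat m w" "admissible m j"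
  shows "0 \<le> DeltaQ w j" "DeltaQ w j \<le> 1"
  unfolding DeltaQ_dterm
  using dsummable[OF assms] dterm_nonneg[OF assms] partial_le1[OF assms]
  by (auto intro!: suminf_nonneg suminf_le_const)


lemma prod_split_first: "(\<Prod>l\<in>{1..Suc k}. f l) = f 1 * (\<Prod>l\<in>{1..k}. f (Suc l))"
  by (induction k) (auto simp: prod.nat_ivl_Suc' mult_ac)

lemma dterm_Suc: "dterm w j (Suc k) = w (j 1) 1 * dterm (shw w) (shm j) k"
proof -
  have "(\<Prod>l\<in>{1..Suc k}. w (j l) l) = w (j 1) 1 * (\<Prod>l\<in>{1..k}. w (j (Suc l)) (Suc l))"
    by (rule prod_split_first)
  then show ?thesis unfolding dterm_def shw_def shm_def acoef_def by simp
qed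

lemma adm_sh: "admissible m j \<Longrightarrow> admissible (shm m) (shm j)"
  unfolding admissible_def shm_def by auto

lemma Wmat_sh: assumes W: "Wmat m w" shows "Wmat (shm m) (shw w)"
proof -
  have "(\<lambda>N. \<Prod>n\<in>{1..N}. shw w (d n) n) \<longlonglongrightarrow> 0" if d: "admissible (shm m) d" for d
  proof -
    define d' where "d' n = (if n \<le> 1 then m 1 else d (n - 1))" for n
    have "d' n \<le> m n" if "n \<ge> 1" for n
    proof (cases "n \<le> 1")
      case True then show ?thesis using that by (simp add: d'_def)
    next
      case False
      then have "d (n - 1) \<le> shm m (n - 1)" using d unfolding admissible_def by simp
      then show ?thesis using False by (simp add: d'_def shm_def)
    qed
    then have ad: "admissible m d'" unfolding admissible_def by blast
    have e: "(\<Prod>n\<in>{1..Suc N}. w (d' n) n) = w (m 1) 1 * (\<Prod>n\<in>{1..N}. shw w (d n) n)" for N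
    proof -
      have "(\<Prod>n\<in>{1..Suc N}. w (d' n) n) = w (d' 1) 1 * (\<Prod>n\<in>{1..N}. w (d' (Suc n)) (Suc n))"
        by (rule prod_split_first)
      also have "(\<Prod>n\<in>{1..N}. w (d' (Suc n)) (Suc n)) = (\<Prod>n\<in>{1..N}. shw w (d n) n)"
        by (intro prod.cong) (auto simp: d'_def shw_def)
      finally show ?thesis by (simp add: d'_def)
    qed
    from LIMSEQ_Suc[OF Wmat_prod[OF W ad]]
    have *: "(\<lambda>N. w (m 1) 1 * (\<Prod>n\<in>{1..N}. shw w (d n) n)) \<longlonglongrightarrow> 0"
      unfolding e .
    have c: "w (m 1) 1 > 0" using Wmat_top[OF W] by simp
    from tendsto_mult_left[OF *, of "1 / w (m 1) 1"] show ?thesis using c by simp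
  qed
  then show ?thesis using W unfolding Wmat_def shm_def shw_def by auto
qed

lemma Delta_rec: assumes "Wmat m w" "admissible m j"
  shows "DeltaQ w j = acoef w (j 1) 1 + w (j 1) 1 * DeltaQ (shw w) (shm j)"
proof -
  have s: "summable (dterm w j)" by (rule dsummable[OF assms])
  have s2: "summable (dterm (shw w) (shm j))" by (rule dsummable[OF Wmat_sh adm_sh]) (use assms in auto)
  have "suminf (dterm w j) = dterm w j 0 + suminf (\<lambda>k. dterm w j (Suc k))"
    using suminf_split_head[OF s] by simp
  also have "suminf (\<lambda>k. dterm w j (Suc k)) = w (j 1) 1 * suminf (dterm (shw w) (shm j))"
    unfolding dterm_Suc using suminf_mult[OF s2] by simp
  finally show ?thesis unfolding DeltaQ_dterm by (simp add: dterm_def[of w j 0])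
qed

lemma Delta_cong: "(\<And>n. n \<ge> 1 \<Longrightarrow> j n = j' n) \<Longrightarrow> DeltaQ w j = DeltaQ w j'"
  unfolding DeltaQ_def
  by (intro arg_cong[where f=suminf] ext arg_cong2[where f="(*)"] prod.cong) auto

lemma Delta_max: assumes W: "Wmat m w" and j: "\<And>n. n \<ge> 1 \<Longrightarrow> j n = m n"
  shows "DeltaQ w j = 1"
proof -
  have a: "admissible m j" using j unfolding admissible_def by simp
  have ps: "sum (dterm w j) {..<N} = 1 - (\<Prod>l\<in>{1..N}. w (j l) l)" for N
  proof (induction N)
    case 0 then show ?case by simp
  next
    case (Suc N)
    have t: "acoef w (m (Suc N)) (Suc N) + w (m (Suc N)) (Suc N) = 1"
      using acoef_top[OF W, of "Suc N"] by (simp add: acoef_Suc)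
    let ?P = "\<Prod>l\<in>{1..N}. w (j l) l"
    have "sum (dterm w j) {..<Suc N} = 1 - ?P + acoef w (m (Suc N)) (Suc N) * ?P"
      using Suc j[of "Suc N"] by (simp add: dterm_def)
    also have "\<dots> = 1 - ?P * (acoef w (m (Suc N)) (Suc N) + w (m (Suc N)) (Suc N)) + acoef w (m (Suc N)) (Suc N) * ?P + ?P * w (m (Suc N)) (Suc N) - ?P * w (m (Suc N)) (Suc N)"
      using t by simp
    also have "\<dots> = 1 - ?P * w (m (Suc N)) (Suc N)" by (simp add: algebra_simps)
    also have "?P * w (m (Suc N)) (Suc N) = (\<Prod>l\<in>{1..Suc N}. w (j l) l)"
      using j[of "Suc N"] by (simp add: prod.nat_ivl_Suc')
    finally show ?case .
  qed
  have "(\<lambda>N. 1 - (\<Prod>l\<in>{1..N}. w (j l) l)) \<longlonglongrightarrow> 1 - 0"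
    by (intro tendsto_diff tendsto_const Wmat_prod[OF W a])
  then have "dterm w j sums 1" unfolding sums_def ps by simp
  then show ?thesis unfolding DeltaQ_dterm by (rule sums_unique[symmetric])
qed

lemma Delta_zero: assumes "\<And>n. n \<ge> 1 \<Longrightarrow> j n = 0" shows "DeltaQ w j = 0"
  unfolding DeltaQ_dterm dterm_def using assms by (simp add: acoef_def)

definition Qpos :: "(nat \<Rightarrow> nat) \<Rightarrow> (nat \<Rightarrow> nat \<Rightarrow> real) \<Rightarrow> bool" where
  "Qpos m q \<longleftrightarrow> (\<forall>n\<ge>1. \<forall>i\<le>m n. q i n > 0)"

lemma Qpos_sh: "Qpos m q \<Longrightarrow> Qpos (shm m) (shw q)"
  unfolding Qpos_def shm_def shw_def by auto

lemma acoef_pos: assumes "Qpos m q" "n \<ge> 1" "1 \<le> i" "i \<le> Suc (m n)"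
  shows "acoef q i n > 0"
proof -
  have "acoef q 1 n = q 0 n" by (simp add: acoef_def)
  moreover have "q 0 n > 0" using assms unfolding Qpos_def by auto
  moreover have "acoef q 1 n \<le> acoef q i n" unfolding acoef_def using assms unfolding Qpos_def
    by (intro sum_mono2) (auto intro: less_imp_le)
  ultimately show ?thesis by linarith
qed

lemma Delta_zero_inv: assumes W: "Wmat m q" and P: "Qpos m q" and a: "admissible m j"
  and D: "DeltaQ q j = 0" and n: "n \<ge> 1" shows "j n = 0"
proof -
  have "\<forall>k. dterm q j k = 0" using D unfolding DeltaQ_dterm
    using suminf_eq_zero_iff[OF dsummable[OF W a]] dterm_nonneg[OF W a] by blast
  then have t: "dterm q j (n - 1) = 0" by blast
  have pp: "(\<Prod>l\<in>{1..n-1}. q (j l) l) > 0" using P a unfolding Qpos_def admissible_def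
    by (intro prod_pos) auto
  have "acoef q (j n) n * (\<Prod>l\<in>{1..n-1}. q (j l) l) = 0" using t n unfolding dterm_def by simp
  then have "acoef q (j n) n = 0" using pp by (metis mult_eq_0_iff less_irrefl)
  moreover have "j n \<noteq> 0 \<Longrightarrow> acoef q (j n) n > 0" using acoef_pos[OF P n, of "j n"] adm[OF a n] by simp
  ultimately show ?thesis by force
qed

lemma Delta_one_step: assumes W: "Wmat m q" and P: "Qpos m q" and a: "admissible m j"
  and D: "DeltaQ q j = 1" shows "j 1 = m 1 \<and> DeltaQ (shw q) (shm j) = 1"
proof -
  let ?D = "DeltaQ (shw q) (shm j)"
  have r: "1 = acoef q (j 1) 1 + q (j 1) 1 * ?D" using Delta_rec[OF W a] D by simp
  have b: "?D \<le> 1" using Delta_bounds(2)[OF Wmat_sh[OF W] adm_sh[OF a]] .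
  have j1: "j 1 \<le> m 1" using adm[OF a] by simp
  have qp: "q (j 1) 1 > 0" using P j1 unfolding Qpos_def by simp
  have le: "acoef q (j 1) 1 + q (j 1) 1 * ?D \<le> acoef q (Suc (j 1)) 1"
    using b qp by (simp add: acoef_Suc)
  have eq: "j 1 = m 1"
  proof (rule ccontr)
    assume "j 1 \<noteq> m 1"
    then have "Suc (j 1) \<le> m 1" using j1 by simp
    then have "acoef q (Suc (j 1)) 1 + q (Suc (j 1)) 1 \<le> 1"
      using acoef_le1[OF W, of 1] by simp
    moreover have "q (Suc (j 1)) 1 > 0" using P \<open>Suc (j 1) \<le> m 1\<close> unfolding Qpos_def by simp
    ultimately show False using le r by linarith
  qed
  have t: "acoef q (m 1) 1 + q (m 1) 1 = 1"
    using acoef_top[OF W, of 1] by (simp add: acoef_Suc)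
  have "q (m 1) 1 * ?D = q (m 1) 1 * 1" using r t unfolding eq by linarith
  then show ?thesis using qp eq by (simp del: mult_cancel_left1)
qed

lemma Delta_one_inv: "Wmat m q \<Longrightarrow> Qpos m q \<Longrightarrow> admissible m j \<Longrightarrow> DeltaQ q j = 1
   \<Longrightarrow> j (Suc n) = m (Suc n)"
proof (induction n arbitrary: m q j)
  case 0 then show ?case using Delta_one_step by simp
next
  case (Suc n)
  from Delta_one_step[OF Suc.prems] have "DeltaQ (shw q) (shm j) = 1" by simp
  from Suc.IH[OF Wmat_sh[OF Suc.prems(1)] Qpos_sh[OF Suc.prems(2)] adm_sh[OF Suc.prems(3)] this]
  show ?case by (simp add: shm_def)
qed


lemma base_le: assumes W: "Wmat m w" and a: "admissible m j" and a': "admissible m j'"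
  and lt: "j 1 < j' 1"
  shows "DeltaQ w j \<le> acoef w (Suc (j 1)) 1" "acoef w (Suc (j 1)) 1 \<le> acoef w (j' 1) 1"
    "acoef w (j' 1) 1 \<le> DeltaQ w j'"
proof -
  have j1: "j 1 \<le> m 1" "j' 1 \<le> m 1" using adm[OF a] adm[OF a'] by auto
  have D: "DeltaQ (shw w) (shm j) \<le> 1" using Delta_bounds(2)[OF Wmat_sh[OF W] adm_sh[OF a]] .
  have D': "DeltaQ (shw w) (shm j') \<ge> 0" using Delta_bounds(1)[OF Wmat_sh[OF W] adm_sh[OF a']] .
  have wn: "w (j 1) 1 \<ge> 0" "w (j' 1) 1 \<ge> 0" using Wmat_nonneg[OF W] j1 by auto
  have r: "DeltaQ w j = acoef w (j 1) 1 + w (j 1) 1 * DeltaQ (shw w) (shm j)" by (rule Delta_rec[OF W a])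
  have "w (j 1) 1 * DeltaQ (shw w) (shm j) \<le> w (j 1) 1" using mult_left_mono[OF D wn(1)] by simp
  then show "DeltaQ w j \<le> acoef w (Suc (j 1)) 1"
    unfolding acoef_Suc r by linarith
  show "acoef w (Suc (j 1)) 1 \<le> acoef w (j' 1) 1"
    using acoef_mono[OF W, of 1 "Suc (j 1)" "j' 1"] lt j1 by simp
  have r': "DeltaQ w j' = acoef w (j' 1) 1 + w (j' 1) 1 * DeltaQ (shw w) (shm j')" by (rule Delta_rec[OF W a'])
  show "acoef w (j' 1) 1 \<le> DeltaQ w j'"
    unfolding r' using mult_nonneg_nonneg[OF wn(2) D'] by linarith
qed

lemma cmp: assumes "Wmat m q" "Qpos m q" "Wmat m p" "admissible m j" "admissible m j'"
  "\<forall>l. 1 \<le> l \<and> l < Suc k \<longrightarrow> j l = j' l" "j (Suc k) < j' (Suc k)"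
shows "DeltaQ q j \<le> DeltaQ q j' \<and> DeltaQ p j \<le> DeltaQ p j' \<and>
       (DeltaQ q j = DeltaQ q j' \<longrightarrow> DeltaQ p j = DeltaQ p j')"
  using assms
proof (induction k arbitrary: m q p j j')
  case 0
  note Wq = "0.prems"(1) and P = "0.prems"(2) and Wp = "0.prems"(3) and a = "0.prems"(4)
    and a' = "0.prems"(5)
  have lt: "j 1 < j' 1" using "0.prems"(7) by simp
  note bq = base_le[OF Wq a a' lt] and bp = base_le[OF Wp a a' lt]
  have j1: "j 1 \<le> m 1" "j' 1 \<le> m 1" using adm[OF a] adm[OF a'] by auto
  have eq: "DeltaQ p j = DeltaQ p j'" if e: "DeltaQ q j = DeltaQ q j'"
  proof -
    have e1: "DeltaQ q j = acoef q (Suc (j 1)) 1" and e2: "acoef q (Suc (j 1)) 1 = acoef q (j' 1) 1"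
      and e3: "acoef q (j' 1) 1 = DeltaQ q j'" using bq e by linarith+
    have qp: "q (j 1) 1 > 0" "q (j' 1) 1 > 0" using P j1 unfolding Qpos_def by auto
    have rq: "DeltaQ q j = acoef q (j 1) 1 + q (j 1) 1 * DeltaQ (shw q) (shm j)" by (rule Delta_rec[OF Wq a])
    have rq': "DeltaQ q j' = acoef q (j' 1) 1 + q (j' 1) 1 * DeltaQ (shw q) (shm j')" by (rule Delta_rec[OF Wq a'])
    have rp: "DeltaQ p j = acoef p (j 1) 1 + p (j 1) 1 * DeltaQ (shw p) (shm j)" by (rule Delta_rec[OF Wp a])
    have rp': "DeltaQ p j' = acoef p (j' 1) 1 + p (j' 1) 1 * DeltaQ (shw p) (shm j')" by (rule Delta_rec[OF Wp a'])
    have "q (j 1) 1 * DeltaQ (shw q) (shm j) = q (j 1) 1 * 1"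
      using e1 unfolding rq acoef_Suc by linarith
    then have "DeltaQ (shw q) (shm j) = 1" using qp by (simp del: mult_cancel_left1)
    note oi = Delta_one_inv[OF Wmat_sh[OF Wq] Qpos_sh[OF P] adm_sh[OF a] this]
    have mx: "shm j n = shm m n" if n1: "n \<ge> 1" for n
    proof -
      obtain k where "n = Suc k" using n1 by (cases n) auto
      then show ?thesis using oi[of k] by simp
    qed
    have "q (j' 1) 1 * DeltaQ (shw q) (shm j') = 0"
      using e3 unfolding rq' by linarith
    then have "DeltaQ (shw q) (shm j') = 0" using qp by simp
    from Delta_zero_inv[OF Wmat_sh[OF Wq] Qpos_sh[OF P] adm_sh[OF a'] this]
    have zr: "n \<ge> 1 \<Longrightarrow> shm j' n = 0" for n .
    have js: "j' 1 = Suc (j 1)"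
    proof (rule ccontr)
      assume "j' 1 \<noteq> Suc (j 1)"
      then have "Suc (Suc (j 1)) \<le> j' 1" using lt by simp
      then have "acoef q (Suc (Suc (j 1))) 1 \<le> acoef q (j' 1) 1"
        using acoef_mono[OF Wq, of 1] j1 by simp
      moreover have "q (Suc (j 1)) 1 > 0" using P j1 lt unfolding Qpos_def by simp
      moreover have "acoef q (Suc (Suc (j 1))) 1 = acoef q (Suc (j 1)) 1 + q (Suc (j 1)) 1" by (rule acoef_Suc)
      ultimately show False using e2 by linarith
    qed
    have "DeltaQ (shw p) (shm j) = 1" using Delta_max[OF Wmat_sh[OF Wp] mx] .
    moreover have "DeltaQ (shw p) (shm j') = 0" using Delta_zero[OF zr] .
    ultimately show ?thesis unfolding rp rp' js acoef_Suc[of p "j 1"]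
      by simp
  qed
  show ?case using bq bp eq by linarith
next
  case (Suc k)
  note Wq = "Suc.prems"(1) and P = "Suc.prems"(2) and Wp = "Suc.prems"(3) and a = "Suc.prems"(4)
    and a' = "Suc.prems"(5)
  have j1: "j 1 = j' 1" using "Suc.prems"(6) by simp
  have ag: "\<forall>l. 1 \<le> l \<and> l < Suc k \<longrightarrow> shm j l = shm j' l" using "Suc.prems"(6) by (simp add: shm_def)
  have lt: "shm j (Suc k) < shm j' (Suc k)" using "Suc.prems"(7) by (simp add: shm_def)
  from Suc.IH[OF Wmat_sh[OF Wq] Qpos_sh[OF P] Wmat_sh[OF Wp] adm_sh[OF a] adm_sh[OF a'] ag lt]
  have IH: "DeltaQ (shw q) (shm j) \<le> DeltaQ (shw q) (shm j') \<and> DeltaQ (shw p) (shm j) \<le> DeltaQ (shw p) (shm j')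
    \<and> (DeltaQ (shw q) (shm j) = DeltaQ (shw q) (shm j') \<longrightarrow> DeltaQ (shw p) (shm j) = DeltaQ (shw p) (shm j'))" .
  have jm: "j 1 \<le> m 1" using adm[OF a] by simp
  have qp: "q (j 1) 1 > 0" using P jm unfolding Qpos_def by auto
  have pp: "p (j 1) 1 \<ge> 0" using Wmat_nonneg[OF Wp] jm by auto
  have rq: "DeltaQ q j = acoef q (j 1) 1 + q (j 1) 1 * DeltaQ (shw q) (shm j)" by (rule Delta_rec[OF Wq a])
  have rq': "DeltaQ q j' = acoef q (j 1) 1 + q (j 1) 1 * DeltaQ (shw q) (shm j')" unfolding j1 by (rule Delta_rec[OF Wq a'])
  have rp: "DeltaQ p j = acoef p (j 1) 1 + p (j 1) 1 * DeltaQ (shw p) (shm j)" by (rule Delta_rec[OF Wp a])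
  have rp': "DeltaQ p j' = acoef p (j 1) 1 + p (j 1) 1 * DeltaQ (shw p) (shm j')" unfolding j1 by (rule Delta_rec[OF Wp a'])
  have 1: "DeltaQ q j \<le> DeltaQ q j'" unfolding rq rq' using IH qp mult_left_mono[of _ _ "q (j 1) 1"] by auto
  have 2: "DeltaQ p j \<le> DeltaQ p j'" unfolding rp rp' using IH pp mult_left_mono[of _ _ "p (j 1) 1"] by auto
  have 3: "DeltaQ p j = DeltaQ p j'" if "DeltaQ q j = DeltaQ q j'"
  proof -
    have "DeltaQ (shw q) (shm j) = DeltaQ (shw q) (shm j')" using that qp unfolding rq rq' by simp
    then show ?thesis using IH unfolding rp rp' by simp
  qed
  show ?case using 1 2 3 by blast
qed

lemma mono_main: assumes Wq: "Wmat m q" and P: "Qpos m q" and Wp: "Wmat m p"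
  and a: "admissible m j" and a': "admissible m j'" and le: "DeltaQ q j \<le> DeltaQ q j'"
  shows "DeltaQ p j \<le> DeltaQ p j'"
proof (cases "\<forall>n\<ge>1. j n = j' n")
  case True then show ?thesis using Delta_cong[of j j' p] by simp
next
  case False
  define n where "n = (LEAST n. n \<ge> 1 \<and> j n \<noteq> j' n)"
  have n: "n \<ge> 1" "j n \<noteq> j' n" using False LeastI_ex[of "\<lambda>n. n \<ge> 1 \<and> j n \<noteq> j' n"]
    unfolding n_def by auto
  have bef: "\<forall>l. 1 \<le> l \<and> l < n \<longrightarrow> j l = j' l" using not_less_Least unfolding n_def by blast
  obtain k where k: "n = Suc k" using n(1) by (cases n) auto
  show ?thesis
  proof (cases "j n < j' n")
    case True
    then show ?thesis using cmp[OF Wq P Wp a a', of k] bef k by auto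
  next
    case False
    then have "j' n < j n" using n(2) by simp
    then have "DeltaQ q j' \<le> DeltaQ q j \<and> DeltaQ p j' \<le> DeltaQ p j \<and>
       (DeltaQ q j' = DeltaQ q j \<longrightarrow> DeltaQ p j' = DeltaQ p j)"
      using cmp[OF Wq P Wp a' a, of k] bef k by auto
    then show ?thesis using le by auto
  qed
qed


definition dig :: "(nat \<Rightarrow> nat) \<Rightarrow> (nat \<Rightarrow> nat \<Rightarrow> real) \<Rightarrow> nat \<Rightarrow> real \<Rightarrow> nat" where
  "dig m w n r = Max {i. i \<le> m n \<and> acoef w i n \<le> r}"

lemma dig_props: assumes W: "Wmat m w" and n: "n \<ge> 1" and r: "0 \<le> r" "r \<le> 1"
  shows "dig m w n r \<le> m n" "acoef w (dig m w n r) n \<le> r"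
    "r \<le> acoef w (dig m w n r) n + w (dig m w n r) n" "w (dig m w n r) n > 0"
proof -
  let ?S = "{i. i \<le> m n \<and> acoef w i n \<le> r}"
  have fin: "finite ?S" by simp
  have ne: "0 \<in> ?S" using r by (simp add: acoef_def)
  then have "?S \<noteq> {}" by blast
  have d: "dig m w n r \<in> ?S" unfolding dig_def using Max_in[OF fin \<open>?S \<noteq> {}\<close>] .
  then show d1: "dig m w n r \<le> m n" and d2: "acoef w (dig m w n r) n \<le> r" by auto
  have up: "r \<le> acoef w (dig m w n r) n + w (dig m w n r) n"
  proof (cases "dig m w n r = m n")
    case True
    then show ?thesis using acoef_top[OF W n] r by (simp add: acoef_Suc)
  next
    case False
    then have "Suc (dig m w n r) \<le> m n" using d1 by simp
    moreover have "Suc (dig m w n r) \<notin> ?S"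
    proof
      assume "Suc (dig m w n r) \<in> ?S"
      then have "Suc (dig m w n r) \<le> dig m w n r" unfolding dig_def using Max_ge[OF fin] by blast
      then show False by simp
    qed
    ultimately have "r < acoef w (Suc (dig m w n r)) n" by auto
    then show ?thesis by (simp add: acoef_Suc)
  qed
  then show "r \<le> acoef w (dig m w n r) n + w (dig m w n r) n" .
  show "w (dig m w n r) n > 0"
  proof (cases "dig m w n r = m n")
    case True then show ?thesis using Wmat_top[OF W n] by simp
  next
    case False
    then have "Suc (dig m w n r) \<le> m n" using d1 by simp
    moreover have "Suc (dig m w n r) \<notin> ?S"
    proof
      assume "Suc (dig m w n r) \<in> ?S"
      then have "Suc (dig m w n r) \<le> dig m w n r" unfolding dig_def using Max_ge[OF fin] by blast
      then show False by simp
    qed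
    ultimately have "r < acoef w (Suc (dig m w n r)) n" by auto
    then show ?thesis using d2 by (simp add: acoef_Suc)
  qed
qed

lemma Delta_surj: assumes W: "Wmat m w" and x: "0 \<le> x" "x \<le> 1"
  shows "\<exists>j. admissible m j \<and> DeltaQ w j = x"
proof -
  define rem where "rem = rec_nat x (\<lambda>k r. (r - acoef w (dig m w (Suc k) r) (Suc k)) / w (dig m w (Suc k) r) (Suc k))"
  have rem0: "rem 0 = x" unfolding rem_def by simp
  have remS: "rem (Suc k) = (rem k - acoef w (dig m w (Suc k) (rem k)) (Suc k)) / w (dig m w (Suc k) (rem k)) (Suc k)" for k
    unfolding rem_def by simp
  have rb: "0 \<le> rem k \<and> rem k \<le> 1" for k
  proof (induction k)
    case 0 then show ?case using x rem0 by simp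
  next
    case (Suc k)
    let ?d = "dig m w (Suc k) (rem k)"
    note dp = dig_props[OF W _ conjunct1[OF Suc] conjunct2[OF Suc], of "Suc k", simplified]
    have "0 \<le> (rem k - acoef w ?d (Suc k)) / w ?d (Suc k)" using dp by simp
    moreover have "(rem k - acoef w ?d (Suc k)) / w ?d (Suc k) \<le> 1" using dp by (simp add: divide_le_eq_1)
    ultimately show ?case unfolding remS by simp
  qed
  define j where "j n = dig m w n (rem (n - 1))" for n
  have jS: "j (Suc k) = dig m w (Suc k) (rem k)" for k by (simp add: j_def)
  have a: "admissible m j" unfolding admissible_def
  proof (intro allI impI)
    fix n :: nat assume "n \<ge> 1"
    then obtain k where "n = Suc k" by (cases n) auto
    then show "j n \<le> m n" using dig_props(1)[OF W _ conjunct1[OF rb] conjunct2[OF rb], of n "k"] by (simp add: jS)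
  qed
  have rec: "rem k = acoef w (j (Suc k)) (Suc k) + w (j (Suc k)) (Suc k) * rem (Suc k)" for k
  proof -
    have "w (j (Suc k)) (Suc k) > 0" unfolding jS using dig_props(4)[OF W _ conjunct1[OF rb] conjunct2[OF rb], of "Suc k" k] by simp
    then show ?thesis unfolding remS jS by simp
  qed
  have ps: "sum (dterm w j) {..<N} = x - rem N * (\<Prod>l\<in>{1..N}. w (j l) l)" for N
  proof (induction N)
    case 0 then show ?case by (simp add: rem0)
  next
    case (Suc N)
    let ?P = "\<Prod>l\<in>{1..N}. w (j l) l"
    have "sum (dterm w j) {..<Suc N} = x - rem N * ?P + acoef w (j (Suc N)) (Suc N) * ?P"
      using Suc by (simp add: dterm_def)
    also have "\<dots> = x - (rem N - acoef w (j (Suc N)) (Suc N)) * ?P" by (simp add: algebra_simps)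
    also have "rem N - acoef w (j (Suc N)) (Suc N) = w (j (Suc N)) (Suc N) * rem (Suc N)"
      using rec[of N] by simp
    also have "x - w (j (Suc N)) (Suc N) * rem (Suc N) * ?P = x - rem (Suc N) * (\<Prod>l\<in>{1..Suc N}. w (j l) l)"
      by (simp add: prod.nat_ivl_Suc')
    finally show ?case .
  qed
  have lim0: "(\<lambda>N. rem N * (\<Prod>l\<in>{1..N}. w (j l) l)) \<longlonglongrightarrow> 0"
  proof (rule tendsto_sandwich[of "\<lambda>_. 0" _ _ "\<lambda>N. \<Prod>l\<in>{1..N}. w (j l) l"])
    show "\<forall>\<^sub>F N in sequentially. 0 \<le> rem N * (\<Prod>l\<in>{1..N}. w (j l) l)"
      using rb prod_nonneg_adm[OF W a] by (auto intro: mult_nonneg_nonneg)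
    show "\<forall>\<^sub>F N in sequentially. rem N * (\<Prod>l\<in>{1..N}. w (j l) l) \<le> (\<Prod>l\<in>{1..N}. w (j l) l)"
      using rb prod_nonneg_adm[OF W a] by (intro always_eventually allI mult_left_le_one_le) auto
    show "(\<lambda>N. \<Prod>l\<in>{1..N}. w (j l) l) \<longlonglongrightarrow> 0" by (rule Wmat_prod[OF W a])
  qed simp
  have "(\<lambda>N. x - rem N * (\<Prod>l\<in>{1..N}. w (j l) l)) \<longlonglongrightarrow> x - 0"
    by (intro tendsto_diff tendsto_const lim0)
  then have "dterm w j sums x" unfolding sums_def ps by simp
  then have "DeltaQ w j = x" unfolding DeltaQ_dterm by (rule sums_unique[symmetric])
  then show ?thesis using a by blast
qed


lemma Q_inst: assumes "Qmatrix m q" shows "Wmat m q" "Qpos m q"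
  using assms unfolding Qmatrix_def Wmat_def Qpos_def by (auto intro: less_imp_le)

lemma P_inst: assumes P: "Pmatrix m p" and nn: "\<forall>n\<ge>1. \<forall>i\<le>m n. p i n \<ge> 0"
  shows "Wmat m p"
proof -
  have top: "p (m n) n > 0" if n: "n \<ge> 1" for n
  proof (cases "m n = 0")
    case True
    then show ?thesis using P n unfolding Pmatrix_def by force
  next
    case False
    then have "m n \<in> {1..m n}" by simp
    then have "(\<Sum>i<m n. p i n) < 1" using P n unfolding Pmatrix_def by blast
    moreover have "(\<Sum>i\<le>m n. p i n) = (\<Sum>i<m n. p i n) + p (m n) n" by (simp add: lessThan_Suc_atMost[symmetric])
    moreover have "(\<Sum>i\<le>m n. p i n) = 1" using P n unfolding Pmatrix_def by blast
    ultimately show ?thesis by linarith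
  qed
  have pr: "(\<lambda>N. \<Prod>n\<in>{1..N}. p (d n) n) \<longlonglongrightarrow> 0" if d: "admissible m d" for d
  proof -
    have "(\<lambda>N. \<Prod>n\<in>{1..N}. \<bar>p (d n) n\<bar>) \<longlonglongrightarrow> 0" using P d unfolding Pmatrix_def by blast
    moreover have "(\<Prod>n\<in>{1..N}. \<bar>p (d n) n\<bar>) = (\<Prod>n\<in>{1..N}. p (d n) n)" for N
      using nn d unfolding admissible_def by (intro prod.cong) auto
    ultimately show ?thesis by simp
  qed
  show ?thesis unfolding Wmat_def using nn top pr P unfolding Pmatrix_def by blast
qed

lemma mono_surj_cont:
  fixes F :: "real \<Rightarrow> real"
  assumes M: "mono_on {0..1} F" and S: "\<forall>t\<in>{0..1}. \<exists>x\<in>{0..1}. F x = t"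
    and F0: "F 0 = 0" and F1: "F 1 = 1"
  shows "continuous_on {0..1} F"
  unfolding continuous_on_iff
proof (intro ballI allI impI)
  fix x e :: real assume x: "x \<in> {0..1}" and e: "0 < e"
  have Fx: "0 \<le> F x" "F x \<le> 1" using mono_onD[OF M, of 0 x] mono_onD[OF M, of x 1] x F0 F1 by auto
  define lo where "lo = max 0 (F x - e/2)"
  define hi where "hi = min 1 (F x + e/2)"
  have "lo \<in> {0..1}" "hi \<in> {0..1}" using Fx e unfolding lo_def hi_def by auto
  then obtain x1 x2 where x1: "x1 \<in> {0..1}" "F x1 = lo" and x2: "x2 \<in> {0..1}" "F x2 = hi"
    using S by meson
  define d1 where "d1 = (if F x = 0 then 1 else x - x1)"
  define d2 where "d2 = (if F x = 1 then 1 else x2 - x)"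
  have d1: "d1 > 0"
  proof (cases "F x = 0")
    case False
    then have "lo < F x" using Fx e unfolding lo_def by auto
    then have "x1 < x" using mono_onD[OF M, of x x1] x x1 by force
    then show ?thesis using False unfolding d1_def by simp
  qed (simp add: d1_def)
  have d2: "d2 > 0"
  proof (cases "F x = 1")
    case False
    then have "F x < hi" using Fx e unfolding hi_def by auto
    then have "x < x2" using mono_onD[OF M, of x2 x] x x2 by force
    then show ?thesis using False unfolding d2_def by simp
  qed (simp add: d2_def)
  show "\<exists>d>0. \<forall>y\<in>{0..1}. dist y x < d \<longrightarrow> dist (F y) (F x) < e"
  proof (intro exI[of _ "min d1 d2"] conjI ballI impI)
    show "0 < min d1 d2" using d1 d2 by simp
    fix y assume y: "y \<in> {0..1}" and dy: "dist y x < min d1 d2"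
    show "dist (F y) (F x) < e"
    proof (cases "y \<le> x")
      case True
      have "F y \<le> F x" using mono_onD[OF M y x True] .
      moreover have "F x - e/2 \<le> F y"
      proof (cases "F x = 0")
        case True then show ?thesis using mono_onD[OF M, of 0 y] y F0 e by auto
      next
        case False
        then have "x1 \<le> y" using dy unfolding d1_def dist_real_def by auto
        then have "F x1 \<le> F y" using mono_onD[OF M x1(1) y] by simp
        then show ?thesis using x1 unfolding lo_def by simp
      qed
      ultimately show ?thesis using e unfolding dist_real_def by simp
    next
      case False
      have "F x \<le> F y" using mono_onD[OF M x y] False by simp
      moreover have "F y \<le> F x + e/2"
      proof (cases "F x = 1")
        case True then show ?thesis using mono_onD[OF M, of y 1] y F1 e by auto
      next
        case c: False
        then have "y \<le> x2" using dy False unfolding d2_def dist_real_def by auto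
        then have "F y \<le> F x2" using mono_onD[OF M y x2(1)] by simp
        then show ?thesis using x2 unfolding hi_def by simp
      qed
      ultimately show ?thesis using e unfolding dist_real_def by simp
    qed
  qed
qed

theorem mainTheorem9:
  fixes m :: "nat \<Rightarrow> nat" and q p :: "nat \<Rightarrow> nat \<Rightarrow> real"
  assumes "Qmatrix m q"
    and "Pmatrix m p"
    and "\<forall>n\<ge>1. \<forall>i\<le>m n. p i n \<ge> 0"
  shows "\<exists>F :: real \<Rightarrow> real.
           (\<forall>x\<in>{0..1}. \<forall>i. nega_rep m q x i \<longrightarrow> Fterm m p i sums F x) \<and>
           F 0 = 0 \<and> F 1 = 1 \<and> mono_on {0..1} F \<and> continuous_on {0..1} F"
proof -
  note Wq = Q_inst(1)[OF assms(1)] and P = Q_inst(2)[OF assms(1)]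
  note Wp = P_inst[OF assms(2,3)]
  define F where "F x = DeltaQ p (SOME j. admissible m j \<and> DeltaQ q j = x)" for x
  have key: "F (DeltaQ q j) = DeltaQ p j" if a: "admissible m j" for j
  proof -
    let ?j = "SOME j'. admissible m j' \<and> DeltaQ q j' = DeltaQ q j"
    have "admissible m ?j \<and> DeltaQ q ?j = DeltaQ q j" by (rule someI[of _ j]) (use a in simp)
    then have "DeltaQ p ?j = DeltaQ p j"
      using mono_main[OF Wq P Wp, of ?j j] mono_main[OF Wq P Wp, of j ?j] a by force
    then show ?thesis unfolding F_def .
  qed
  have rep: "\<exists>j. admissible m j \<and> DeltaQ q j = x \<and> F x = DeltaQ p j" if x01: "x \<in> {0..1}" for x
  proof -
    obtain j where "admissible m j" "DeltaQ q j = x" using Delta_surj[OF Wq, of x] x01 by auto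
    then show ?thesis using key by blast
  qed
  have part1: "Fterm m p i sums F x" if nr: "nega_rep m q x i" for x i
  proof -
    define r where "r n = (if even n then m n - i n else i n)" for n
    have ai: "admissible m i" and xr: "x = DeltaQ q r" using nr unfolding nega_rep_def r_def by auto
    have ar: "admissible m r" using ai unfolding admissible_def r_def by auto
    have ft: "Fterm m p i = dterm p r"
    proof
      fix k
      have "(\<Prod>j\<in>{1..k}. ptilde m p (i j) j) = (\<Prod>l\<in>{1..k}. p (r l) l)"
        by (intro prod.cong) (auto simp: ptilde_def r_def)
      moreover have "betatilde m p (i (k+1)) (k+1) = acoef p (r (k+1)) (k+1)"
        by (auto simp: betatilde_def r_def beta_def acoef_def)
      ultimately show "Fterm m p i k = dterm p r k" unfolding Fterm_def dterm_def by simp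
    qed
    have "dterm p r sums DeltaQ p r" unfolding DeltaQ_dterm using dsummable[OF Wp ar] by (rule summable_sums)
    then show ?thesis unfolding ft xr key[OF ar] .
  qed
  have F0: "F 0 = 0"
  proof -
    have a0: "admissible m (\<lambda>_. 0)" unfolding admissible_def by simp
    have "DeltaQ q (\<lambda>_. 0) = 0" "DeltaQ p (\<lambda>_. 0) = 0" by (simp_all add: Delta_zero)
    then show ?thesis using key[OF a0] by simp
  qed
  have F1: "F 1 = 1"
  proof -
    have a1: "admissible m m" unfolding admissible_def by simp
    have "DeltaQ q m = 1" "DeltaQ p m = 1" using Delta_max[OF Wq, of m] Delta_max[OF Wp, of m] by simp_all
    then show ?thesis using key[OF a1] by simp
  qed
  have M: "mono_on {0..1} F"
  proof (rule mono_onI)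
    fix x y :: real assume x: "x \<in> {0..1}" and y: "y \<in> {0..1}" and le: "x \<le> y"
    obtain jx where jx: "admissible m jx" "DeltaQ q jx = x" "F x = DeltaQ p jx" using rep[OF x] by blast
    obtain jy where jy: "admissible m jy" "DeltaQ q jy = y" "F y = DeltaQ p jy" using rep[OF y] by blast
    show "F x \<le> F y" using mono_main[OF Wq P Wp jx(1) jy(1)] jx jy le by simp
  qed
  have S: "\<forall>t\<in>{0..1}. \<exists>x\<in>{0..1}. F x = t"
  proof
    fix t :: real assume "t \<in> {0..1}"
    then obtain j where j: "admissible m j" "DeltaQ p j = t" using Delta_surj[OF Wp, of t] by auto
    then have "DeltaQ q j \<in> {0..1}" using Delta_bounds[OF Wq j(1)] by simp
    then show "\<exists>x\<in>{0..1}. F x = t" using key[OF j(1)] j(2) by blast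
  qed
  have C: "continuous_on {0..1} F" by (rule mono_surj_cont[OF M S F0 F1])
  show ?thesis using part1 F0 F1 M C by blast
qed

end
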